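(* Let $L\in\mathbb N$ and $0\le p<1$. Consider the Elephant Random Walk with finite disordered memory of length $L$ and acceptance probability $p$, defined as follows. A jar initially contains $N_0^+$ signs $+1$ and $N_0^-$ signs $-1$ with $N_0^++N_0^-=L$, and $X_0\in\mathbb Z$ is arbitrary. Inductively, at step $n+1$: a sign is drawn uniformly at random from the $L$ signs in the jar and removed (without replacement); independently, with probability $p$ it is kept and with probability $1-p$ it is multiplied by $-1$, giving the new sign $s_{n+1}\in\{\pm1\}$; set $X_{n+1}=X_n+s_{n+1}$; and put $s_{n+1}$ into the jar (so the jar again contains $L$ signs). Then $$\lim_{t\to\infty}\frac{X_t}{t}=0\ \text{ a.s.},\qquad \frac{X_t}{\sqrt t}\Rightarrow N\Big(0,\frac{p}{1-p}\Big).$$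
   Context: $N(0,\sigma^2)$ denotes the centered normal distribution with variance $\sigma^2$ (a point mass at $0$ when $\sigma^2=0$); $\Rightarrow$ denotes convergence in distribution. *)

theory Defs
  imports "HOL-Probability.Probability"
begin

text \<open>The randomness of step n+1 is a pair (i, keep):
  i is a uniformly random position in the jar (uniform draw of one of the L signs),
  keep is a Bernoulli(p) coin (True: keep the sign, False: multiply by -1).\<close>

definition erw_step :: "int list \<times> int \<Rightarrow> nat \<times> bool \<Rightarrow> int list \<times> int" where
  "erw_step st r =
     (let jar = fst st; x = snd st; i = fst r; d = jar ! i;
          s = (if snd r then d else - d)
      in (take i jar @ drop (Suc i) jar @ [s], x + s))"

primrec erw_state :: "int list \<Rightarrow> int \<Rightarrow> nat \<Rightarrow> (nat \<times> bool) stream \<Rightarrow> int list \<times> int" where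
  "erw_state jar0 x0 0 \<omega> = (jar0, x0)"
| "erw_state jar0 x0 (Suc n) \<omega> = erw_step (erw_state jar0 x0 n \<omega>) (\<omega> !! n)"

definition erw_X :: "int list \<Rightarrow> int \<Rightarrow> nat \<Rightarrow> (nat \<times> bool) stream \<Rightarrow> int" where
  "erw_X jar0 x0 t \<omega> = snd (erw_state jar0 x0 t \<omega>)"

definition erw_space :: "nat \<Rightarrow> real \<Rightarrow> (nat \<times> bool) stream measure" where
  "erw_space L p = stream_space (measure_pmf (pair_pmf (pmf_of_set {..<L}) (bernoulli_pmf p)))"

definition normal_law :: "real \<Rightarrow> real measure" where
  "normal_law v = (if v = 0 then return borel 0 else density lborel (normal_density 0 (sqrt v)))"

end

theory Submission
  imports Defs "HOL-Real_Asymp.Real_Asymp"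
begin


type_synonym st = "int list \<times> int"

definition Rp :: "nat \<Rightarrow> real \<Rightarrow> (nat \<times> bool) pmf" where
  "Rp L p = pair_pmf (pmf_of_set {..<L}) (bernoulli_pmf p)"

primrec Kp :: "nat \<Rightarrow> real \<Rightarrow> nat \<Rightarrow> st \<Rightarrow> st pmf" where
  "Kp L p 0 s = return_pmf s"
| "Kp L p (Suc n) s = bind_pmf (Rp L p) (\<lambda>r. Kp L p n (erw_step s r))"

definition stt :: "nat \<Rightarrow> st \<Rightarrow> (nat \<times> bool) stream \<Rightarrow> st" where
  "stt n s \<omega> = erw_state (fst s) (snd s) n \<omega>"

lemma stt_0[simp]: "stt 0 s \<omega> = s" by (simp add: stt_def)

lemma stt_Suc_fwd: "stt (Suc n) s \<omega> = erw_step (stt n s \<omega>) (\<omega> !! n)"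
  by (simp add: stt_def)

lemma stt_Suc: "stt (Suc n) s \<omega> = stt n (erw_step s (shd \<omega>)) (stl \<omega>)"
proof (induction n)
  case 0 then show ?case by (simp add: stt_def)
next
  case (Suc n)
  have "stt (Suc (Suc n)) s \<omega> = erw_step (stt (Suc n) s \<omega>) (\<omega> !! Suc n)"
    by (rule stt_Suc_fwd)
  also have "\<dots> = erw_step (stt n (erw_step s (shd \<omega>)) (stl \<omega>)) (stl \<omega> !! n)"
    using Suc by simp
  also have "\<dots> = stt (Suc n) (erw_step s (shd \<omega>)) (stl \<omega>)"
    by (simp add: stt_Suc_fwd)
  finally show ?case .
qed

lemma stt_measurable[measurable]:
  "stt n s \<in> measurable (stream_space (measure_pmf R)) (count_space UNIV)"
proof (induction n)
  case 0 then show ?case by simp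
next
  case (Suc n)
  have m1: "(\<lambda>\<omega>. \<omega> !! n) \<in> measurable (stream_space (measure_pmf R)) (count_space UNIV)"
    using measurable_snth[of n "measure_pmf R"] by (simp add: measurable_def)
  have "(\<lambda>\<omega>. (stt n s \<omega>, \<omega> !! n)) \<in> measurable (stream_space (measure_pmf R)) (count_space UNIV \<Otimes>\<^sub>M count_space UNIV)"
    using Suc m1 by (rule measurable_Pair)
  then have "(\<lambda>\<omega>. (stt n s \<omega>, \<omega> !! n)) \<in> measurable (stream_space (measure_pmf R)) (count_space UNIV)"
    by (simp add: pair_measure_countable)
  then show ?case unfolding stt_Suc_fwd
    by (rule measurable_compose[where f="\<lambda>\<omega>. (stt n s \<omega>, \<omega> !! n)" and g="\<lambda>x. erw_step (fst x) (snd x)", simplified]) simp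
qed

lemma finite_set_Rp: "L \<ge> 1 \<Longrightarrow> finite (set_pmf (Rp L p))"
proof -
  assume "L \<ge> 1"
  then have "{..<L} \<noteq> {}" by (metis lessThan_iff empty_iff less_le_trans zero_less_one)
  then have "set_pmf (Rp L p) \<subseteq> {..<L} \<times> UNIV"
    unfolding Rp_def set_pair_pmf
    by (auto simp: set_pmf_of_set)
  then show ?thesis by (rule finite_subset) auto
qed

lemma set_Rp: "r \<in> set_pmf (Rp L p) \<Longrightarrow> L \<ge> 1 \<Longrightarrow> fst r < L"
proof -
  assume a: "r \<in> set_pmf (Rp L p)" "L \<ge> 1"
  then have "{..<L} \<noteq> {}" by (metis lessThan_iff empty_iff less_le_trans zero_less_one)
  then have "set_pmf (pmf_of_set {..<L}) = {..<L}" by (intro set_pmf_of_set) auto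
  with a show ?thesis unfolding Rp_def by (cases r) auto
qed

lemma finite_set_Kp: "L \<ge> 1 \<Longrightarrow> finite (set_pmf (Kp L p n s))"
  by (induction n arbitrary: s) (auto simp: finite_set_Rp)

lemma distr_stt:
  "distr (stream_space (measure_pmf (Rp L p))) (count_space UNIV) (stt n s) = measure_pmf (Kp L p n s)"
proof (induction n arbitrary: s)
  case 0
  interpret S: prob_space "stream_space (measure_pmf (Rp L p))"
    by (rule prob_space.prob_space_stream_space) (rule prob_space_measure_pmf)
  show ?case
    by (rule measure_eqI_countable[where A=UNIV]) (auto simp: emeasure_distr split: split_indicator)
next
  case (Suc n)
  let ?S = "stream_space (measure_pmf (Rp L p))"
  show ?case
  proof (rule measure_eqI_countable[where A=UNIV])
    fix v :: st
    have "emeasure (distr ?S (count_space UNIV) (stt (Suc n) s)) {v} =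
          emeasure ?S (stt (Suc n) s -` {v} \<inter> space ?S)"
      by (rule emeasure_distr) auto
    also have "\<dots> = (\<integral>\<^sup>+t. emeasure ?S {x\<in>space ?S. t ## x \<in> stt (Suc n) s -` {v} \<inter> space ?S} \<partial>measure_pmf (Rp L p))"
      by (rule prob_space.emeasure_stream_space[OF prob_space_measure_pmf]) (rule measurable_sets[OF stt_measurable]; simp)
    also have "\<dots> = (\<integral>\<^sup>+t. emeasure ?S (stt n (erw_step s t) -` {v} \<inter> space ?S) \<partial>measure_pmf (Rp L p))"
      by (intro nn_integral_cong arg_cong[where f="emeasure ?S"])
         (auto simp: stt_Suc space_stream_space)
    also have "\<dots> = (\<integral>\<^sup>+t. emeasure (Kp L p n (erw_step s t)) {v} \<partial>measure_pmf (Rp L p))"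
      by (intro nn_integral_cong) (simp add: Suc[symmetric] emeasure_distr)
    also have "\<dots> = emeasure (Kp L p (Suc n) s) {v}" by simp
    finally show "emeasure (distr ?S (count_space UNIV) (stt (Suc n) s)) {v} = emeasure (Kp L p (Suc n) s) {v}" .
  qed auto
qed

lemma integral_stt:
  fixes f :: "st \<Rightarrow> 'b::{banach, second_countable_topology}"
  shows "(\<integral>\<omega>. f (stt n s \<omega>) \<partial>stream_space (measure_pmf (Rp L p))) = (\<integral>v. f v \<partial>measure_pmf (Kp L p n s))"
  by (subst distr_stt[symmetric], subst integral_distr) auto

lemma integral_bind_pmf_fin:
  fixes f :: "'b \<Rightarrow> 'c::{banach, second_countable_topology}"
  assumes fin: "finite (set_pmf M)" and finN: "\<And>x. x \<in> set_pmf M \<Longrightarrow> finite (set_pmf (N x))"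
  shows "(\<integral>y. f y \<partial>measure_pmf (bind_pmf M N)) = (\<integral>x. (\<integral>y. f y \<partial>measure_pmf (N x)) \<partial>measure_pmf M)"
proof -
  define A where "A = (\<Union>x\<in>set_pmf M. set_pmf (N x))"
  have finA: "finite A" unfolding A_def using fin finN by auto
  have "(\<integral>y. f y \<partial>measure_pmf (bind_pmf M N)) = (\<Sum>a\<in>A. pmf (bind_pmf M N) a *\<^sub>R f a)"
    by (rule integral_measure_pmf[OF finA]) (auto simp: A_def)
  also have "\<dots> = (\<Sum>a\<in>A. (\<Sum>x\<in>set_pmf M. pmf M x * pmf (N x) a) *\<^sub>R f a)"
  proof (intro sum.cong refl arg_cong2[where f="(*\<^sub>R)"])
    fix a
    have "pmf (bind_pmf M N) a = (\<integral>x. pmf (N x) a \<partial>measure_pmf M)" by (rule pmf_bind)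
    also have "\<dots> = (\<Sum>x\<in>set_pmf M. pmf M x *\<^sub>R pmf (N x) a)"
      by (rule integral_measure_pmf[OF fin]) auto
    finally show "pmf (bind_pmf M N) a = (\<Sum>x\<in>set_pmf M. pmf M x * pmf (N x) a)" by simp
  qed
  also have "\<dots> = (\<Sum>x\<in>set_pmf M. pmf M x *\<^sub>R (\<Sum>a\<in>A. pmf (N x) a *\<^sub>R f a))"
    by (simp add: scaleR_sum_left scaleR_sum_right sum.swap[of _ A] )
  also have "\<dots> = (\<Sum>x\<in>set_pmf M. pmf M x *\<^sub>R (\<integral>y. f y \<partial>measure_pmf (N x)))"
  proof (intro sum.cong refl arg_cong2[where f="(*\<^sub>R)"])
    fix x assume "x \<in> set_pmf M"
    then show "(\<Sum>a\<in>A. pmf (N x) a *\<^sub>R f a) = (\<integral>y. f y \<partial>measure_pmf (N x))"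
      by (intro integral_measure_pmf[OF finA, symmetric]) (auto simp: A_def)
  qed
  also have "\<dots> = (\<integral>x. (\<integral>y. f y \<partial>measure_pmf (N x)) \<partial>measure_pmf M)"
    by (rule integral_measure_pmf[OF fin, symmetric]) auto
  finally show ?thesis .
qed

lemma integral_Kp_Suc:
  fixes f :: "st \<Rightarrow> 'b::{banach, second_countable_topology}"
  assumes "L \<ge> 1"
  shows "(\<integral>v. f v \<partial>measure_pmf (Kp L p (Suc n) s)) =
         (\<integral>r. (\<integral>v. f v \<partial>measure_pmf (Kp L p n (erw_step s r))) \<partial>measure_pmf (Rp L p))"
  using assms by (simp add: integral_bind_pmf_fin finite_set_Rp finite_set_Kp)

lemma integral_Rp:
  fixes F :: "nat \<times> bool \<Rightarrow> 'b::{banach, second_countable_topology}"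
  assumes "L \<ge> 1" "0 \<le> p" "p \<le> 1"
  shows "(\<integral>r. F r \<partial>measure_pmf (Rp L p)) =
     (\<Sum>i<L. (p / L) *\<^sub>R F (i, True) + ((1 - p) / L) *\<^sub>R F (i, False))"
proof -
  have fin: "finite ({..<L} \<times> (UNIV :: bool set))" by auto
  have "(\<integral>r. F r \<partial>measure_pmf (Rp L p)) = (\<Sum>a\<in>{..<L} \<times> UNIV. pmf (Rp L p) a *\<^sub>R F a)"
    by (rule integral_measure_pmf[OF fin]) (use set_Rp assms(1) in force)
  also have "\<dots> = (\<Sum>i<L. \<Sum>b\<in>UNIV. pmf (Rp L p) (i, b) *\<^sub>R F (i, b))"
    by (simp add: sum.cartesian_product)
  also have "\<dots> = (\<Sum>i<L. (p / L) *\<^sub>R F (i, True) + ((1 - p) / L) *\<^sub>R F (i, False))"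
  proof (intro sum.cong refl)
    fix i assume i: "i \<in> {..<L}"
    have ne: "{..<L} \<noteq> {}" using i by auto
    have "pmf (pmf_of_set {..<L}) i = 1 / L" using i ne by simp
    then show "(\<Sum>b\<in>UNIV. pmf (Rp L p) (i, b) *\<^sub>R F (i, b)) = (p / L) *\<^sub>R F (i, True) + ((1 - p) / L) *\<^sub>R F (i, False)"
      using assms by (simp add: UNIV_bool Rp_def pmf_pair)
  qed
  finally show ?thesis .
qed

definition valid :: "nat \<Rightarrow> st \<Rightarrow> bool" where
  "valid L s \<longleftrightarrow> length (fst s) = L \<and> set (fst s) \<subseteq> {1, -1}"

lemma sum_list_split: "i < length xs \<Longrightarrow> sum_list xs = sum_list (take i xs) + xs ! i + sum_list (drop (Suc i) xs)"
  by (metis add.assoc id_take_nth_drop sum_list.Cons sum_list_append)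

lemma step_eq: "erw_step s (i, b) = (take i (fst s) @ drop (Suc i) (fst s) @ [if b then fst s ! i else - (fst s ! i)],
    snd s + (if b then fst s ! i else - (fst s ! i)))"
  by (simp add: erw_step_def Let_def)

lemma valid_nth: "valid L s \<Longrightarrow> i < L \<Longrightarrow> fst s ! i = 1 \<or> fst s ! i = -1"
proof -
  assume a: "valid L s" "i < L"
  then have "fst s ! i \<in> set (fst s)" unfolding valid_def by (intro nth_mem) auto
  with a show ?thesis unfolding valid_def by blast
qed

lemma valid_step: "valid L s \<Longrightarrow> i < L \<Longrightarrow> valid L (erw_step s (i, b))"
  using valid_nth[of L s i] unfolding valid_def step_eq
  using set_take_subset[of i "fst s"] set_drop_subset[of "Suc i" "fst s"]
  by auto

lemma valid_Kp: "L \<ge> 1 \<Longrightarrow> valid L s \<Longrightarrow> v \<in> set_pmf (Kp L p n s) \<Longrightarrow> valid L v"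
proof (induction n arbitrary: s)
  case 0 then show ?case by simp
next
  case (Suc n)
  then obtain r where r: "r \<in> set_pmf (Rp L p)" "v \<in> set_pmf (Kp L p n (erw_step s r))" by auto
  then have "fst r < L" using set_Rp Suc.prems by auto
  then have "valid L (erw_step s r)" using valid_step[of L s "fst r" "snd r"] Suc.prems by simp
  then show ?case using Suc.IH[of "erw_step s r"] r Suc.prems by auto
qed


lemma valid_J: "valid L s \<Longrightarrow> \<bar>sum_list (fst s)\<bar> \<le> int L"
proof -
  assume v: "valid L s"
  have "\<bar>sum_list (fst s)\<bar> \<le> sum_list (map abs (fst s))" by (rule sum_list_abs)
  also have "map abs (fst s) = map (\<lambda>_. 1) (fst s)"
    using v unfolding valid_def by (intro map_cong) auto
  also have "sum_list \<dots> = int L" using v unfolding valid_def by (simp add: sum_list_triv)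
  finally show ?thesis .
qed

definition mm :: "real \<Rightarrow> st \<Rightarrow> real" where
  "mm c s = real_of_int (snd s) - c * real_of_int (sum_list (fst s))"

lemma mm_step:
  assumes "valid L s" "i < L" "p < 1"
  shows "mm ((1 - 2*p) / (2*(1-p))) (erw_step s (i, b)) - mm ((1 - 2*p) / (2*(1-p))) s =
    (if b then real_of_int (fst s ! i) else - (p / (1 - p)) * real_of_int (fst s ! i))"
proof -
  have il: "i < length (fst s)" using assms unfolding valid_def by auto
  have sl: "sum_list (take i (fst s)) + sum_list (drop (Suc i) (fst s)) = sum_list (fst s) - fst s ! i"
    using sum_list_split[OF il] by simp
  define d where "d = real_of_int (fst s ! i)"
  have ne: "1 - p \<noteq> 0" using assms by simp
  define s' where "s' = (if b then fst s ! i else - (fst s ! i))"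
  have J: "real_of_int (sum_list (fst (erw_step s (i, b)))) = real_of_int (sum_list (fst s)) - d + real_of_int s'"
    unfolding step_eq s'_def[symmetric] d_def using sl by simp
  have X: "real_of_int (snd (erw_step s (i, b))) = real_of_int (snd s) + real_of_int s'"
    unfolding step_eq s'_def[symmetric] by simp
  define c where "c = (1 - 2*p) / (2*(1-p))"
  have e: "mm c (erw_step s (i, b)) - mm c s = real_of_int s' - c * (real_of_int s' - d)"
    unfolding mm_def J X by (simp add: algebra_simps)
  have c2: "- 1 + 2 * c = - (p / (1 - p))"
    unfolding c_def using ne by (simp add: field_simps)
  show ?thesis
  proof (cases b)
    case True then show ?thesis using e by (simp add: s'_def d_def c_def)
  next
    case False
    then have "real_of_int s' = - d" by (simp add: s'_def d_def)
    then have "mm c (erw_step s (i, b)) - mm c s = (- 1 + 2 * c) * d" using e by (simp add: algebra_simps)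
    then show ?thesis using False c2 by (simp add: c_def d_def)
  qed
qed



lemma integral_Kp_0: "(\<integral>v. f v \<partial>measure_pmf (Kp L p 0 s)) = (f s :: 'b::{banach, second_countable_topology})"
  by (simp add: integral_measure_pmf[of "{s}"])

lemma eq_helper: "(X::complex) = A + c * B \<Longrightarrow> X - c * a * y = A + c * (B - a * y)"
  by (simp add: algebra_simps)

lemma iter_bound:
  fixes \<psi> :: "st \<Rightarrow> complex" and a :: complex and \<delta> :: real
  assumes L: "L \<ge> 1"
    and step: "\<And>s. valid L s \<Longrightarrow> cmod ((\<integral>r. \<psi> (erw_step s r) \<partial>measure_pmf (Rp L p)) - a * \<psi> s) \<le> \<delta>"
    and a: "cmod a \<le> 1"
  shows "valid L s \<Longrightarrow> cmod ((\<integral>v. \<psi> v \<partial>measure_pmf (Kp L p n s)) - a^n * \<psi> s) \<le> n * \<delta>"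
proof (induction n arbitrary: s)
  case 0 then show ?case by (simp add: integral_Kp_0)
next
  case (Suc n)
  let ?R = "measure_pmf (Rp L p)"
  define E where "E r = (\<integral>v. \<psi> v \<partial>measure_pmf (Kp L p n (erw_step s r)))" for r
  have int: "integrable ?R g" for g :: "_ \<Rightarrow> complex"
    by (rule integrable_measure_pmf_finite) (rule finite_set_Rp[OF L])
  have "(\<integral>v. \<psi> v \<partial>measure_pmf (Kp L p (Suc n) s)) = (\<integral>r. E r \<partial>?R)"
    unfolding E_def by (rule integral_Kp_Suc[OF L])
  also have "\<dots> = (\<integral>r. E r - a^n * \<psi> (erw_step s r) \<partial>?R) + a^n * (\<integral>r. \<psi> (erw_step s r) \<partial>?R)"
  proof -
    have "(\<integral>r. E r - a^n * \<psi> (erw_step s r) \<partial>?R) = (\<integral>r. E r \<partial>?R) - (\<integral>r. a^n * \<psi> (erw_step s r) \<partial>?R)"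
      by (rule Bochner_Integration.integral_diff[OF int int])
    moreover have "(\<integral>r. a^n * \<psi> (erw_step s r) \<partial>?R) = a^n * (\<integral>r. \<psi> (erw_step s r) \<partial>?R)"
      by (rule integral_mult_right_zero)
    ultimately show ?thesis by simp
  qed
  finally have eq: "(\<integral>v. \<psi> v \<partial>measure_pmf (Kp L p (Suc n) s)) - a^Suc n * \<psi> s =
      (\<integral>r. E r - a^n * \<psi> (erw_step s r) \<partial>?R) + a^n * ((\<integral>r. \<psi> (erw_step s r) \<partial>?R) - a * \<psi> s)"
    unfolding power_Suc2 by (rule eq_helper)
  have b1: "cmod (\<integral>r. E r - a^n * \<psi> (erw_step s r) \<partial>?R) \<le> n * \<delta>"
  proof -
    have "cmod (\<integral>r. E r - a^n * \<psi> (erw_step s r) \<partial>?R) \<le> (\<integral>r. cmod (E r - a^n * \<psi> (erw_step s r)) \<partial>?R)"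
      by (rule integral_norm_bound)
    also have "\<dots> \<le> n * \<delta>"
    proof (rule measure_pmf.integral_le_const)
      show "integrable ?R (\<lambda>r. cmod (E r - a ^ n * \<psi> (erw_step s r)))"
        by (rule integrable_measure_pmf_finite) (rule finite_set_Rp[OF L])
      show "AE r in ?R. cmod (E r - a ^ n * \<psi> (erw_step s r)) \<le> n * \<delta>"
      proof (subst AE_measure_pmf_iff, intro ballI)
        fix r assume "r \<in> set_pmf (Rp L p)"
        then have "fst r < L" using set_Rp L by auto
        then have "valid L (erw_step s r)" using valid_step[of L s "fst r" "snd r"] Suc.prems by simp
        then show "cmod (E r - a ^ n * \<psi> (erw_step s r)) \<le> n * \<delta>" unfolding E_def by (rule Suc.IH)
      qed
    qed
    finally show ?thesis .
  qed
  have b2: "cmod (a^n * ((\<integral>r. \<psi> (erw_step s r) \<partial>?R) - a * \<psi> s)) \<le> \<delta>"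
  proof -
    have "cmod (a^n) \<le> 1" using a by (simp add: norm_power power_le_one)
    moreover have "cmod ((\<integral>r. \<psi> (erw_step s r) \<partial>?R) - a * \<psi> s) \<le> \<delta>" by (rule step[OF Suc.prems])
    ultimately show ?thesis unfolding norm_mult
      using mult_left_le_one_le[of "cmod ((\<integral>r. \<psi> (erw_step s r) \<partial>?R) - a * \<psi> s)" "cmod (a^n)"] by force
  qed
  have "cmod ((\<integral>r. E r - a^n * \<psi> (erw_step s r) \<partial>?R) + a^n * ((\<integral>r. \<psi> (erw_step s r) \<partial>?R) - a * \<psi> s)) \<le> n * \<delta> + \<delta>"
    using b1 b2 norm_triangle_ineq[of "(\<integral>r. E r - a^n * \<psi> (erw_step s r) \<partial>?R)"
      "a^n * ((\<integral>r. \<psi> (erw_step s r) \<partial>?R) - a * \<psi> s)"] by linarith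
  then show ?case unfolding eq of_nat_Suc by (simp add: ring_distribs add.commute)
qed

lemma iexp_taylor2: "cmod (iexp x - (1 + \<i> * x - x^2 / 2)) \<le> \<bar>x\<bar>^3 / 6"
proof -
  have "(\<Sum>k \<le> 2. (\<i> * complex_of_real x)^k / fact k) = 1 + \<i> * x - x^2 / 2"
    by (simp add: numeral_2_eq_2 power2_eq_square algebra_simps)
  then show ?thesis using iexp_approx1[of x 2] by (simp add: numeral_3_eq_3)
qed

lemma iexp_taylor0: "cmod (iexp x - 1) \<le> \<bar>x\<bar>"
  using iexp_approx1[of x 0] by simp

lemma alg_helper:
  fixes e1 e2 :: complex and p x1 x2 Q :: real
  shows "complex_of_real p * e1 + complex_of_real (1-p) * e2 - (1 - complex_of_real Q/2) =
     complex_of_real p * (e1 - (1 + \<i> * x1 - x1^2/2)) + complex_of_real (1-p) * (e2 - (1 + \<i> * x2 - x2^2/2))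
     + (\<i> * complex_of_real (p * x1 + (1-p) * x2) - complex_of_real (p * x1^2 + (1-p) * x2^2 - Q) / 2)"
  by (simp add: algebra_simps diff_divide_distrib add_divide_distrib)

lemma taylor_pair:
  fixes h d p :: real
  assumes d: "\<bar>d\<bar> = 1" and p: "0 \<le> p" "p < 1" and q_def: "q = p/(1-p)"
  shows "cmod (complex_of_real p * iexp (h*d) + complex_of_real (1-p) * iexp (-q*h*d) - complex_of_real (1 - q * h^2/2)) \<le> (1 + q^3) * \<bar>h\<bar>^3"
proof -
  have q0: "q \<ge> 0" using p by (simp add: q_def)
  define x1 where "x1 = h*d"
  define x2 where "x2 = -q*h*d"
  have h1p: "cmod (1 - complex_of_real p) = 1 - p"
  proof -
    have "1 - complex_of_real p = complex_of_real (1 - p)" by simp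
    then show ?thesis using p by (simp only: norm_of_real)
  qed
  have d2: "d^2 = 1" using d by (metis abs_power2 one_power2 power2_abs)
  have s1: "p * x1 + (1-p) * x2 = 0" unfolding x1_def x2_def q_def using p by (simp add: field_simps)
  have s2: "p * x1^2 + (1-p) * x2^2 = q * h^2"
  proof -
    have "p * x1^2 + (1-p) * x2^2 = (p + (1-p)*q^2) * h^2 * d^2"
      unfolding x1_def x2_def by (simp add: power_mult_distrib algebra_simps)
    also have "p + (1-p)*q^2 = q"
    proof -
      have qp: "(1-p)*q = p" unfolding q_def using p by simp
      have "(1-p)*q^2 = p*q" using qp by (simp add: power2_eq_square mult.assoc[symmetric])
      moreover have "q - p*q = p" using qp by (simp add: algebra_simps)
      ultimately show ?thesis by linarith
    qed
    finally show ?thesis using d2 by simp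
  qed
  have "complex_of_real p * iexp x1 + complex_of_real (1-p) * iexp x2 - (1 - complex_of_real (q * h^2)/2) =
     complex_of_real p * (iexp x1 - (1 + \<i> * x1 - x1^2/2)) + complex_of_real (1-p) * (iexp x2 - (1 + \<i> * x2 - x2^2/2))
     + (\<i> * complex_of_real (p * x1 + (1-p) * x2) - complex_of_real (p * x1^2 + (1-p) * x2^2 - q * h^2) / 2)"
    by (rule alg_helper)
  also have "\<dots> = complex_of_real p * (iexp x1 - (1 + \<i> * x1 - x1^2/2)) + complex_of_real (1-p) * (iexp x2 - (1 + \<i> * x2 - x2^2/2))"
    using s1 s2 by simp
  finally have eq: "complex_of_real p * iexp x1 + complex_of_real (1-p) * iexp x2 - (1 - complex_of_real (q * h^2)/2) =
     complex_of_real p * (iexp x1 - (1 + \<i> * x1 - x1^2/2)) + complex_of_real (1-p) * (iexp x2 - (1 + \<i> * x2 - x2^2/2))" .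
  have "cmod (complex_of_real p * (iexp x1 - (1 + \<i> * x1 - x1^2/2)) + complex_of_real (1-p) * (iexp x2 - (1 + \<i> * x2 - x2^2/2)))
     \<le> p * (\<bar>x1\<bar>^3/6) + (1-p) * (\<bar>x2\<bar>^3/6)"
  proof -
    have "cmod (complex_of_real p * (iexp x1 - (1 + \<i> * x1 - x1^2/2))) \<le> p * (\<bar>x1\<bar>^3/6)"
    proof -
      have "cmod (complex_of_real p * (iexp x1 - (1 + \<i> * x1 - x1^2/2))) = p * cmod (iexp x1 - (1 + \<i> * x1 - x1^2/2))"
        using p by (simp add: norm_mult)
      then show ?thesis using mult_left_mono[OF iexp_taylor2[of x1], of "p"] p by simp
    qed
    moreover have "cmod (complex_of_real (1-p) * (iexp x2 - (1 + \<i> * x2 - x2^2/2))) \<le> (1-p) * (\<bar>x2\<bar>^3/6)"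
    proof -
      have "cmod (complex_of_real (1-p) * (iexp x2 - (1 + \<i> * x2 - x2^2/2))) = (1-p) * cmod (iexp x2 - (1 + \<i> * x2 - x2^2/2))"
        using p by (simp add: norm_mult h1p)
      then show ?thesis using mult_left_mono[OF iexp_taylor2[of x2], of "(1-p)"] p by simp
    qed
    ultimately show ?thesis by (metis add_mono norm_triangle_le)
  qed
  also have "\<dots> \<le> \<bar>h\<bar>^3 + q^3 * \<bar>h\<bar>^3"
  proof -
    have "\<bar>x1\<bar>^3 = \<bar>h\<bar>^3" unfolding x1_def using d by (simp add: abs_mult)
    moreover have "\<bar>x2\<bar>^3 = q^3 * \<bar>h\<bar>^3" unfolding x2_def using d q0 by (simp add: abs_mult power_mult_distrib)
    moreover have "p * (\<bar>h\<bar>^3/6) \<le> \<bar>h\<bar>^3"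
      using p mult_right_mono[of p 6 "\<bar>h\<bar>^3"] by simp
    moreover have "(1-p) * (q^3 * \<bar>h\<bar>^3/6) \<le> q^3 * \<bar>h\<bar>^3"
      using p q0 mult_right_mono[of "1-p" 6 "q^3*\<bar>h\<bar>^3"] by simp
    ultimately show ?thesis by simp
  qed
  finally have "cmod (complex_of_real p * iexp x1 + complex_of_real (1-p) * iexp x2 - (1 - complex_of_real (q * h^2)/2)) \<le> \<bar>h\<bar>^3 + q^3 * \<bar>h\<bar>^3"
    unfolding eq .
  then have "cmod (complex_of_real p * iexp x1 + complex_of_real (1-p) * iexp x2 - (1 - complex_of_real (q * h^2)/2)) \<le> (1 + q^3) * \<bar>h\<bar>^3"
    by (simp add: distrib_right)
  moreover have "complex_of_real (1 - q * h^2/2) = 1 - complex_of_real (q * h^2)/2" by simp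
  ultimately show ?thesis unfolding x1_def x2_def by simp
qed

lemma one_step_char:
  fixes h :: real
  assumes L: "L \<ge> 1" and p: "0 \<le> p" "p < 1" and v: "valid L s"
    and c_def: "c = (1 - 2*p) / (2*(1-p))" and q_def: "q = p/(1-p)"
  shows "cmod ((\<integral>r. iexp (h * mm c (erw_step s r)) \<partial>measure_pmf (Rp L p)) - complex_of_real (1 - q * h^2/2) * iexp (h * mm c s))
     \<le> (1 + q^3) * \<bar>h\<bar>^3"
proof -
  define \<psi> where "\<psi> x = iexp (h * mm c x)" for x
  define d where "d i = real_of_int (fst s ! i)" for i
  define a where "a = 1 - q * h^2/2"
  define T where "T i = \<psi> s * (complex_of_real p * iexp (h*d i) + complex_of_real (1-p) * iexp (-q*h*d i) - complex_of_real a)" for i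
  have Lpos: "real L > 0" using L by simp
  have step1: "\<psi> (erw_step s (i, b)) = \<psi> s * iexp (h * (if b then d i else - q * d i))" if i: "i < L" for i b
  proof -
    have "mm c (erw_step s (i, b)) = mm c s + (if b then d i else - q * d i)"
      using mm_step[OF v i p(2), of b] unfolding c_def[symmetric] q_def[symmetric] d_def by simp
    then show ?thesis unfolding \<psi>_def by (simp add: distrib_left exp_add mult.commute)
  qed
  have "(\<integral>r. \<psi> (erw_step s r) \<partial>measure_pmf (Rp L p)) =
     (\<Sum>i<L. (p / L) *\<^sub>R \<psi> (erw_step s (i, True)) + ((1 - p) / L) *\<^sub>R \<psi> (erw_step s (i, False)))"
    using L p by (intro integral_Rp) auto
  also have "\<dots> = (\<Sum>i<L. (1/L) *\<^sub>R (\<psi> s * (complex_of_real p * iexp (h*d i) + complex_of_real (1-p) * iexp (-q*h*d i))))"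
  proof (intro sum.cong refl)
    fix i assume "i \<in> {..<L}"
    then have i: "i < L" by simp
    show "(p / L) *\<^sub>R \<psi> (erw_step s (i, True)) + ((1 - p) / L) *\<^sub>R \<psi> (erw_step s (i, False)) =
      (1/L) *\<^sub>R (\<psi> s * (complex_of_real p * iexp (h*d i) + complex_of_real (1-p) * iexp (-q*h*d i)))"
      unfolding step1[OF i] scaleR_conv_of_real by (simp add: algebra_simps add_divide_distrib[symmetric])
  qed
  finally have I: "(\<integral>r. \<psi> (erw_step s r) \<partial>measure_pmf (Rp L p)) = \<dots>" .
  have A: "complex_of_real a * \<psi> s = (\<Sum>i<L. (1/L) *\<^sub>R (complex_of_real a * \<psi> s))"
    using Lpos by (simp add: scaleR_conv_of_real)
  have D: "(\<integral>r. \<psi> (erw_step s r) \<partial>measure_pmf (Rp L p)) - complex_of_real a * \<psi> s = (\<Sum>i<L. (1/L) *\<^sub>R T i)"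
  proof -
    have E: "(\<Sum>i<L. (1/L) *\<^sub>R T i) = (\<Sum>i<L. (1/L) *\<^sub>R (\<psi> s * (complex_of_real p * iexp (h*d i) + complex_of_real (1-p) * iexp (-q*h*d i))))
       - (\<Sum>i<L. (1/L) *\<^sub>R (complex_of_real a * \<psi> s))"
      unfolding T_def right_diff_distrib scaleR_diff_right sum_subtractf by (simp add: mult.commute)
    show ?thesis unfolding I E A[symmetric] ..
  qed
  have TB: "cmod (T i) \<le> (1 + q^3) * \<bar>h\<bar>^3" if i: "i < L" for i
  proof -
    have "\<bar>d i\<bar> = 1" using valid_nth[OF v i] unfolding d_def by auto
    then have "cmod (complex_of_real p * iexp (h*d i) + complex_of_real (1-p) * iexp (-q*h*d i) - complex_of_real a) \<le> (1 + q^3) * \<bar>h\<bar>^3"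
      unfolding a_def using taylor_pair[OF _ p q_def, of "d i" h] by simp
    moreover have "cmod (\<psi> s) = 1" unfolding \<psi>_def by simp
    ultimately show ?thesis unfolding T_def norm_mult by simp
  qed
  have "cmod (\<Sum>i<L. (1/L) *\<^sub>R T i) \<le> (\<Sum>i<L. (1/L) * ((1 + q^3) * \<bar>h\<bar>^3))"
    by (rule order.trans[OF norm_sum sum_mono]) (use TB Lpos in \<open>auto intro: divide_right_mono\<close>)
  also have "\<dots> = (1 + q^3) * \<bar>h\<bar>^3" using Lpos by simp
  finally show ?thesis using D unfolding \<psi>_def a_def by simp
qed

lemma B1_bound:
  assumes L: "L \<ge> 1" and v0: "valid L s0"
  shows "cmod ((\<integral>v. iexp (h * real_of_int (snd v)) \<partial>measure_pmf (Kp L p n s0)) - (\<integral>v. iexp (h * mm c v) \<partial>measure_pmf (Kp L p n s0)))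
     \<le> \<bar>h\<bar> * \<bar>c\<bar> * L"
proof -
  let ?K = "measure_pmf (Kp L p n s0)"
  have int: "integrable ?K g" for g :: "_ \<Rightarrow> complex"
    by (rule integrable_measure_pmf_finite) (rule finite_set_Kp[OF L])
  have "cmod ((\<integral>v. iexp (h * real_of_int (snd v)) \<partial>?K) - (\<integral>v. iexp (h * mm c v) \<partial>?K))
     = cmod (\<integral>v. iexp (h * real_of_int (snd v)) - iexp (h * mm c v) \<partial>?K)"
    by (simp add: Bochner_Integration.integral_diff[OF int int])
  also have "\<dots> \<le> (\<integral>v. cmod (iexp (h * real_of_int (snd v)) - iexp (h * mm c v)) \<partial>?K)"
    by (rule integral_norm_bound)
  also have "\<dots> \<le> \<bar>h\<bar> * \<bar>c\<bar> * L"
  proof (rule measure_pmf.integral_le_const[OF integrable_measure_pmf_finite[OF finite_set_Kp[OF L]]])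
    show "AE v in ?K. cmod (iexp (h * real_of_int (snd v)) - iexp (h * mm c v)) \<le> \<bar>h\<bar> * \<bar>c\<bar> * L"
    proof (subst AE_measure_pmf_iff, intro ballI)
      fix v assume "v \<in> set_pmf (Kp L p n s0)"
      then have vv: "valid L v" using valid_Kp[OF L v0] by blast
      define J where "J = real_of_int (sum_list (fst v))"
      have J: "\<bar>J\<bar> \<le> L" using valid_J[OF vv] unfolding J_def by linarith
      have e: "iexp (h * real_of_int (snd v)) = iexp (h * mm c v) * iexp (h * c * J)"
        unfolding mm_def J_def by (simp add: algebra_simps flip: exp_add)
      have "cmod (iexp (h * real_of_int (snd v)) - iexp (h * mm c v)) = cmod (iexp (h * c * J) - 1)"
      proof -
        have "iexp (h * mm c v) * iexp (h * c * J) - iexp (h * mm c v) = iexp (h * mm c v) * (iexp (h * c * J) - 1)"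
          by (simp add: right_diff_distrib)
        then show ?thesis unfolding e by (simp only: norm_mult) simp
      qed
      also have "\<dots> \<le> \<bar>h * c * J\<bar>" by (rule iexp_taylor0)
      also have "\<dots> \<le> \<bar>h\<bar> * \<bar>c\<bar> * L" using J by (simp add: abs_mult mult_left_mono)
      finally show "cmod (iexp (h * real_of_int (snd v)) - iexp (h * mm c v)) \<le> \<bar>h\<bar> * \<bar>c\<bar> * L" .
    qed
  qed
  finally show ?thesis .
qed

lemma clt_char:
  assumes L: "L \<ge> 1" and p: "0 \<le> p" "p < 1" and v0: "valid L s0"
  shows "(\<lambda>t. \<integral>v. iexp (u * (real_of_int (snd v) / sqrt (real t))) \<partial>measure_pmf (Kp L p t s0))
     \<longlonglongrightarrow> complex_of_real (exp (- (p/(1-p) * u^2 / 2)))"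
proof -
  define c where "c = (1 - 2*p) / (2*(1-p))"
  define q where "q = p/(1-p)"
  have q0: "q \<ge> 0" using p by (simp add: q_def)
  define h where "h t = u / sqrt (real t)" for t :: nat
  define a where "a t = 1 - q * (h t)^2/2" for t
  define F where "F t = (\<integral>v. iexp (u * (real_of_int (snd v) / sqrt (real t))) \<partial>measure_pmf (Kp L p t s0))" for t
  define G where "G t = complex_of_real (a t ^ t) * iexp (h t * mm c s0)" for t
  define E where "E t = \<bar>u\<bar> / sqrt (real t) * \<bar>c\<bar> * L + real t * ((1+q^3) * (\<bar>u\<bar> / sqrt (real t))^3)" for t :: nat
  define T where "T = nat \<lceil>q * u^2\<rceil> + 1"
  have bound: "cmod (F t - G t) \<le> E t" if tT: "t \<ge> T" for t
  proof -
    have tpos: "real t > 0" using tT unfolding T_def by simp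
    have h2: "(h t)^2 = u^2 / real t" unfolding h_def using tpos by (simp add: power_divide)
    have "q * u^2 \<le> real t" using tT unfolding T_def by linarith
    then have "q * (h t)^2 \<le> 1" unfolding h2 using tpos by (simp add: field_simps)
    moreover have "q * (h t)^2 \<ge> 0" using q0 by simp
    ultimately have a1: "\<bar>a t\<bar> \<le> 1" unfolding a_def by simp
    have Fe: "F t = (\<integral>v. iexp (h t * real_of_int (snd v)) \<partial>measure_pmf (Kp L p t s0))"
      unfolding F_def h_def by (simp add: field_simps)
    have b1: "cmod (F t - (\<integral>v. iexp (h t * mm c v) \<partial>measure_pmf (Kp L p t s0))) \<le> \<bar>h t\<bar> * \<bar>c\<bar> * L"
      unfolding Fe by (rule B1_bound[OF L v0])
    have b2: "cmod ((\<integral>v. iexp (h t * mm c v) \<partial>measure_pmf (Kp L p t s0)) - (complex_of_real (a t))^t * iexp (h t * mm c s0))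
        \<le> t * ((1 + q^3) * \<bar>h t\<bar>^3)"
    proof (rule iter_bound[OF L _ _ v0])
      fix s assume "valid L s"
      then show "cmod ((\<integral>r. iexp (h t * mm c (erw_step s r)) \<partial>measure_pmf (Rp L p)) - complex_of_real (a t) * iexp (h t * mm c s))
           \<le> (1 + q^3) * \<bar>h t\<bar>^3"
        unfolding a_def using one_step_char[OF L p _ c_def q_def] by blast
    next
      show "cmod (complex_of_real (a t)) \<le> 1" using a1 by simp
    qed
    have "cmod (F t - G t) \<le> \<bar>h t\<bar> * \<bar>c\<bar> * L + t * ((1 + q^3) * \<bar>h t\<bar>^3)"
      using norm_triangle_ineq[of "F t - (\<integral>v. iexp (h t * mm c v) \<partial>measure_pmf (Kp L p t s0))"
          "(\<integral>v. iexp (h t * mm c v) \<partial>measure_pmf (Kp L p t s0)) - (complex_of_real (a t))^t * iexp (h t * mm c s0)"]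
        b1 b2 unfolding G_def by (simp add: of_real_power)
    also have "\<dots> = E t" unfolding E_def h_def by (simp add: abs_div)
    finally show ?thesis .
  qed
  define K where "K = \<bar>u\<bar> * \<bar>c\<bar> * L + (1+q^3) * \<bar>u\<bar>^3"
  have Kz: "(\<lambda>t. K / sqrt (real t)) \<longlonglongrightarrow> 0" by real_asymp
  have E0: "E \<longlonglongrightarrow> 0"
  proof (rule Lim_transform_eventually[OF Kz], rule eventually_sequentiallyI[of 1])
    fix t :: nat assume "t \<ge> 1"
    then have tp: "real t > 0" by simp
    have "real t * (\<bar>u\<bar> / sqrt (real t))^3 = \<bar>u\<bar>^3 / sqrt (real t)"
    proof -
      have "real t = sqrt (real t) ^ 2" using tp by simp
      then have "real t * (\<bar>u\<bar> / sqrt (real t))^3 = sqrt (real t) ^ 2 * (\<bar>u\<bar>^3 / sqrt (real t) ^ 3)"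
        by (simp add: power_divide)
      also have "\<dots> = \<bar>u\<bar>^3 / sqrt (real t)" using tp by (simp add: field_simps power2_eq_square power3_eq_cube)
      finally show ?thesis .
    qed
    then have e2: "real t * ((1+q^3) * (\<bar>u\<bar> / sqrt (real t))^3) = (1+q^3) * \<bar>u\<bar>^3 / sqrt (real t)"
      by (metis mult.left_commute times_divide_eq_right)
    show "K / sqrt (real t) = E t" unfolding E_def K_def e2 add_divide_distrib by simp
  qed
  have FG: "(\<lambda>t. F t - G t) \<longlonglongrightarrow> 0"
    by (rule Lim_null_comparison[OF _ E0]) (use bound in \<open>auto simp: eventually_sequentially\<close>)
  have ha: "(\<lambda>t. a t ^ t) \<longlonglongrightarrow> exp (- (q * u^2 / 2))"
  proof (rule Lim_transform_eventually[OF tendsto_exp_limit_sequentially[of "- (q * u^2 / 2)"]])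
    show "\<forall>\<^sub>F t in sequentially. (1 + - (q * u\<^sup>2 / 2) / real t) ^ t = a t ^ t"
    proof (rule eventually_sequentiallyI[of 1])
      fix t :: nat assume "t \<ge> 1"
      then have "real t > 0" by simp
      then have "(h t)^2 = u^2 / real t" unfolding h_def by (simp add: power_divide)
      then show "(1 + - (q * u\<^sup>2 / 2) / real t) ^ t = a t ^ t" unfolding a_def by (simp add: field_simps)
    qed
  qed
  have h0: "h \<longlonglongrightarrow> 0" unfolding h_def by real_asymp
  have "(\<lambda>t. iexp (h t * mm c s0)) \<longlonglongrightarrow> iexp (0 * mm c s0)"
    by (intro tendsto_intros h0)
  then have G0: "G \<longlonglongrightarrow> complex_of_real (exp (- (q * u^2 / 2))) * 1"
    unfolding G_def by (intro tendsto_intros ha) simp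
  have "F \<longlonglongrightarrow> complex_of_real (exp (- (q * u^2 / 2))) * 1"
    by (rule Lim_transform[OF G0 FG])
  then show ?thesis unfolding F_def q_def by simp
qed

lemma exp_le_quad: fixes x :: real assumes "\<bar>x\<bar> \<le> 1" shows "exp x \<le> 1 + x + x^2"
proof (cases "x \<ge> 0")
  case True then show ?thesis using exp_bound[of x] assms by simp
next
  case False
  then have x0: "x < 0" by simp
  have "1 - x \<le> exp (-x)" using exp_ge_add_one_self[of "-x"] by simp
  then have "exp x \<le> 1 / (1 - x)" using x0 by (simp add: exp_minus field_simps)
  also have "\<dots> \<le> 1 + x + x^2"
  proof -
    have e: "(1 + x + x^2) * (1 - x) = 1 - x * x^2" by (simp add: algebra_simps power2_eq_square)
    have "x * x^2 < 0" using x0 by (intro mult_neg_pos) auto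
    then have "1 \<le> (1 + x + x^2) * (1 - x)" unfolding e by simp
    then show ?thesis using x0 by (simp add: field_simps)
  qed
  finally show ?thesis .
qed

lemma pair_exp_bound:
  fixes l d p q :: real
  assumes d: "\<bar>d\<bar> = 1" and p: "0 \<le> p" "p < 1" and q_def: "q = p/(1-p)"
    and l: "\<bar>l\<bar> * (1 + q) \<le> 1"
  shows "p * exp (l * d) + (1 - p) * exp (- l * q * d) \<le> exp (l^2 * (1+q)^2)"
proof -
  have q0: "q \<ge> 0" using p by (simp add: q_def)
  have qp: "(1-p) * q = p" unfolding q_def using p by simp
  have d2: "d^2 = 1" using d by (metis abs_power2 one_power2 power2_abs)
  have lq: "\<bar>l\<bar> * (1 + q) = \<bar>l\<bar> + \<bar>l\<bar> * q" by (simp add: distrib_left)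
  have lq0: "\<bar>l\<bar> * q \<ge> 0" using q0 by simp
  have l1: "\<bar>l * d\<bar> \<le> 1" using l lq lq0 d by (simp add: abs_mult)
  have l2: "\<bar>- l * q * d\<bar> \<le> 1" using l lq d q0 by (simp add: abs_mult)
  have "p * exp (l * d) + (1 - p) * exp (- l * q * d) \<le> p * (1 + l*d + (l*d)^2) + (1-p) * (1 + (-l*q*d) + (-l*q*d)^2)"
    using exp_le_quad[OF l1] exp_le_quad[OF l2] p by (intro add_mono mult_left_mono) auto
  also have "\<dots> = 1 + l * d * (p - (1-p)*q) + l^2 * d^2 * (p + (1-p) * q * q)"
    by (simp add: algebra_simps power2_eq_square)
  also have "\<dots> = 1 + l^2 * (p + p * q)" using qp d2 by simp
  also have "\<dots> \<le> 1 + l^2 * (1+q)^2"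
  proof -
    have "p * q \<le> q" using p q0 mult_right_mono[of p 1 q] by simp
    moreover have "(1+q)^2 = 1 + 2*q + q*q" by (simp add: power2_eq_square algebra_simps)
    moreover have "q * q \<ge> 0" using q0 by simp
    ultimately have "p + p * q \<le> (1+q)^2" using p q0 by linarith
    then show ?thesis by (simp add: mult_left_mono)
  qed
  also have "\<dots> \<le> exp (l^2 * (1+q)^2)" by (rule exp_ge_add_one_self)
  finally show ?thesis .
qed

lemma one_step_exp:
  fixes l Kz :: real
  assumes L: "L \<ge> 1" and p: "0 \<le> p" "p < 1" and v: "valid L s"
    and c_def: "c = (1 - 2*p) / (2*(1-p))" and q_def: "q = p/(1-p)"
    and l: "\<bar>l\<bar> * (1 + q) \<le> 1"
  shows "(\<integral>r. exp (l * (mm c (erw_step s r) - Kz)) \<partial>measure_pmf (Rp L p)) \<le> exp (l^2 * (1+q)^2) * exp (l * (mm c s - Kz))"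
proof -
  define d where "d i = real_of_int (fst s ! i)" for i
  define E0 where "E0 = exp (l * (mm c s - Kz))"
  have Lpos: "real L > 0" using L by simp
  have step1: "exp (l * (mm c (erw_step s (i, b)) - Kz)) = E0 * exp (l * (if b then d i else - q * d i))" if i: "i < L" for i b
  proof -
    have "mm c (erw_step s (i, b)) = mm c s + (if b then d i else - q * d i)"
      using mm_step[OF v i p(2), of b] unfolding c_def[symmetric] q_def[symmetric] d_def by simp
    then show ?thesis unfolding E0_def by (simp add: algebra_simps flip: exp_add)
  qed
  have "(\<integral>r. exp (l * (mm c (erw_step s r) - Kz)) \<partial>measure_pmf (Rp L p)) =
     (\<Sum>i<L. (p / L) *\<^sub>R exp (l * (mm c (erw_step s (i, True)) - Kz)) + ((1 - p) / L) *\<^sub>R exp (l * (mm c (erw_step s (i, False)) - Kz)))"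
    using L p by (intro integral_Rp) auto
  also have "\<dots> = (\<Sum>i<L. (E0 / L) * (p * exp (l * d i) + (1 - p) * exp (- l * q * d i)))"
  proof (intro sum.cong refl)
    fix i assume "i \<in> {..<L}"
    then have i: "i < L" by simp
    show "(p / L) *\<^sub>R exp (l * (mm c (erw_step s (i, True)) - Kz)) + ((1 - p) / L) *\<^sub>R exp (l * (mm c (erw_step s (i, False)) - Kz)) =
      (E0 / L) * (p * exp (l * d i) + (1 - p) * exp (- l * q * d i))"
      unfolding step1[OF i] by (simp add: algebra_simps add_divide_distrib[symmetric] diff_divide_distrib[symmetric])
  qed
  also have "\<dots> \<le> (\<Sum>i<L. (E0 / L) * exp (l^2 * (1+q)^2))"
  proof (intro sum_mono mult_left_mono)
    fix i assume "i \<in> {..<L}"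
    then have "\<bar>d i\<bar> = 1" using valid_nth[OF v] unfolding d_def by fastforce
    then show "p * exp (l * d i) + (1 - p) * exp (- l * q * d i) \<le> exp (l^2 * (1+q)^2)"
      by (rule pair_exp_bound[OF _ p q_def l])
    show "0 \<le> E0 / real L" unfolding E0_def by simp
  qed
  also have "\<dots> = exp (l^2 * (1+q)^2) * E0" using Lpos by simp
  finally show ?thesis unfolding E0_def .
qed

lemma iter_exp:
  fixes l Kz :: real
  assumes L: "L \<ge> 1" and p: "0 \<le> p" "p < 1"
    and c_def: "c = (1 - 2*p) / (2*(1-p))" and q_def: "q = p/(1-p)"
    and l: "\<bar>l\<bar> * (1 + q) \<le> 1"
  shows "valid L s \<Longrightarrow> (\<integral>v. exp (l * (mm c v - Kz)) \<partial>measure_pmf (Kp L p n s)) \<le> exp (n * (l^2 * (1+q)^2)) * exp (l * (mm c s - Kz))"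
proof (induction n arbitrary: s)
  case 0 then show ?case by (simp add: integral_Kp_0)
next
  case (Suc n)
  let ?R = "measure_pmf (Rp L p)"
  let ?B = "l^2 * (1+q)^2"
  have int: "integrable ?R g" for g :: "_ \<Rightarrow> real"
    by (rule integrable_measure_pmf_finite) (rule finite_set_Rp[OF L])
  have "(\<integral>v. exp (l * (mm c v - Kz)) \<partial>measure_pmf (Kp L p (Suc n) s)) =
      (\<integral>r. (\<integral>v. exp (l * (mm c v - Kz)) \<partial>measure_pmf (Kp L p n (erw_step s r))) \<partial>?R)"
    by (rule integral_Kp_Suc[OF L])
  also have "\<dots> \<le> (\<integral>r. exp (n * ?B) * exp (l * (mm c (erw_step s r) - Kz)) \<partial>?R)"
  proof (rule integral_mono_AE[OF int int])
    show "AE r in ?R. (\<integral>v. exp (l * (mm c v - Kz)) \<partial>measure_pmf (Kp L p n (erw_step s r))) \<le> exp (n * ?B) * exp (l * (mm c (erw_step s r) - Kz))"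
    proof (subst AE_measure_pmf_iff, intro ballI)
      fix r assume "r \<in> set_pmf (Rp L p)"
      then have "fst r < L" using set_Rp L by auto
      then have "valid L (erw_step s r)" using valid_step[of L s "fst r" "snd r"] Suc.prems by simp
      then show "(\<integral>v. exp (l * (mm c v - Kz)) \<partial>measure_pmf (Kp L p n (erw_step s r))) \<le> exp (n * ?B) * exp (l * (mm c (erw_step s r) - Kz))"
        by (rule Suc.IH)
    qed
  qed
  also have "\<dots> = exp (n * ?B) * (\<integral>r. exp (l * (mm c (erw_step s r) - Kz)) \<partial>?R)" by simp
  also have "\<dots> \<le> exp (n * ?B) * (exp ?B * exp (l * (mm c s - Kz)))"
    by (intro mult_left_mono one_step_exp[OF L p Suc.prems c_def q_def l]) auto
  also have "\<dots> = exp (Suc n * ?B) * exp (l * (mm c s - Kz))"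
    by (simp add: algebra_simps exp_add[symmetric])
  finally show ?case .
qed

lemma tail_bound:
  assumes L: "L \<ge> 1" and p: "0 \<le> p" "p < 1" and v0: "valid L s0"
    and c_def: "c = (1 - 2*p) / (2*(1-p))" and q_def: "q = p/(1-p)"
    and e: "0 < \<epsilon>" "\<epsilon> \<le> 1"
  shows "measure_pmf.prob (Kp L p t s0) {v. \<epsilon> * t \<le> \<bar>mm c v - mm c s0\<bar>} \<le> 2 * exp (- (t * (\<epsilon>^2 / (4*(1+q)^2))))"
proof -
  have q0: "q \<ge> 0" using p by (simp add: q_def)
  define B where "B = 1 + q"
  have B1: "B \<ge> 1" using q0 by (simp add: B_def)
  define l where "l = \<epsilon> / (2 * B^2)"
  have l0: "l > 0" using e B1 by (simp add: l_def)
  have lB: "\<bar>l\<bar> * (1 + q) \<le> 1"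
  proof -
    have "\<bar>l\<bar> * (1 + q) = \<epsilon> / (2 * B)" using l0 B1 e unfolding l_def B_def by (simp add: power2_eq_square)
    also have "\<dots> \<le> 1" using e B1 by (simp add: field_simps)
    finally show ?thesis .
  qed
  have lB': "\<bar>-l\<bar> * (1 + q) \<le> 1" using lB by simp
  let ?K = "measure_pmf (Kp L p t s0)"
  let ?A = "{v. \<epsilon> * t \<le> \<bar>mm c v - mm c s0\<bar>}"
  define m0 where "m0 = mm c s0"
  let ?f = "\<lambda>v. exp (- (l * \<epsilon> * t)) * exp (l * (mm c v - m0)) + exp (- (l * \<epsilon> * t)) * exp ((-l) * (mm c v - m0))"
  have int: "integrable ?K g" for g :: "_ \<Rightarrow> real"
    by (rule integrable_measure_pmf_finite) (rule finite_set_Kp[OF L])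
  have "measure_pmf.prob (Kp L p t s0) ?A = (\<integral>v. indicator ?A v \<partial>?K)" by simp
  also have "\<dots> \<le> (\<integral>v. ?f v \<partial>?K)"
  proof (rule integral_mono[OF int int])
    fix v
    show "indicator ?A v \<le> ?f v"
    proof (cases "v \<in> ?A")
      case True
      then have "\<epsilon> * t \<le> mm c v - m0 \<or> \<epsilon> * t \<le> - (mm c v - m0)" unfolding m0_def by auto
      then have "1 \<le> exp (- (l * \<epsilon> * t)) * exp (l * (mm c v - m0)) \<or> 1 \<le> exp (- (l * \<epsilon> * t)) * exp ((-l) * (mm c v - m0))"
      proof
        assume "\<epsilon> * t \<le> mm c v - m0"
        then have "l * (\<epsilon> * t) \<le> l * (mm c v - m0)" using l0 by (intro mult_left_mono) auto
        then have "0 \<le> - (l * \<epsilon> * t) + l * (mm c v - m0)" by (simp add: algebra_simps)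
        then have "1 \<le> exp (- (l * \<epsilon> * t)) * exp (l * (mm c v - m0))" by (simp flip: exp_add)
        then show ?thesis ..
      next
        assume "\<epsilon> * t \<le> - (mm c v - m0)"
        then have "l * (\<epsilon> * t) \<le> l * (- (mm c v - m0))" using l0 by (intro mult_left_mono) auto
        then have "0 \<le> - (l * \<epsilon> * t) + (-l) * (mm c v - m0)" by (simp add: algebra_simps)
        then have "1 \<le> exp (- (l * \<epsilon> * t)) * exp ((-l) * (mm c v - m0))" by (simp flip: exp_add)
        then show ?thesis ..
      qed
      then show ?thesis using True by (auto intro: add_increasing add_increasing2)
    next
      case False then show ?thesis by simp
    qed
  qed
  also have "\<dots> = exp (- (l * \<epsilon> * t)) * (\<integral>v. exp (l * (mm c v - m0)) \<partial>?K) + exp (- (l * \<epsilon> * t)) * (\<integral>v. exp ((-l) * (mm c v - m0)) \<partial>?K)"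
    by (simp add: int)
  also have "\<dots> \<le> exp (- (l * \<epsilon> * t)) * exp (t * (l^2 * (1+q)^2)) + exp (- (l * \<epsilon> * t)) * exp (t * ((-l)^2 * (1+q)^2))"
    using iter_exp[OF L p c_def q_def lB v0, where Kz=m0 and n=t] iter_exp[OF L p c_def q_def lB' v0, where Kz=m0 and n=t]
    unfolding m0_def by (intro add_mono mult_left_mono) auto
  also have "\<dots> = 2 * exp (- (l * \<epsilon> * t) + t * (l^2 * B^2))" by (simp add: B_def mult_exp_exp)
  also have "- (l * \<epsilon> * t) + t * (l^2 * B^2) = - (t * (\<epsilon>^2 / (4*B^2)))"
    using B1 unfolding l_def by (simp add: field_simps power2_eq_square)
  finally show ?thesis unfolding B_def .
qed

lemma normal_law_props:
  fixes v :: real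
  assumes v: "v \<ge> 0"
  shows "real_distribution (normal_law v)" and "char (normal_law v) u = complex_of_real (exp (- (v * u^2 / 2)))"
proof -
  have "real_distribution (normal_law v) \<and> char (normal_law v) u = complex_of_real (exp (- (v * u^2 / 2)))"
  proof (cases "v = 0")
    case True
    have rd: "real_distribution (return borel (0::real))"
      unfolding real_distribution_def real_distribution_axioms_def by (simp add: prob_space_return)
    have "char (return borel (0::real)) u = 1"
      unfolding char_def by (subst integral_return) auto
    then show ?thesis using rd True by (simp add: normal_law_def)
  next
    case False
    then have vp: "v > 0" using v by simp
    define \<sigma> where "\<sigma> = sqrt v"
    have sp: "\<sigma> > 0" using vp by (simp add: \<sigma>_def)
    let ?M = "std_normal_distribution"
    interpret M: real_distribution ?M by (rule real_dist_normal_dist)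
    have d1: "distributed ?M lborel (\<lambda>x. x) std_normal_density"
      unfolding distributed_def
    proof (intro conjI)
      show "distr ?M lborel (\<lambda>x. x) = density lborel (\<lambda>x. ennreal (std_normal_density x))"
        by (subst distr_id2) auto
    qed auto
    have "distributed ?M lborel (\<lambda>x. 0 + \<sigma> * x) (normal_density (0 + \<sigma> * 0) (\<bar>\<sigma>\<bar> * 1))"
      by (rule M.normal_density_affine[OF d1]) (use sp in auto)
    then have "distr ?M lborel (\<lambda>x. \<sigma> * x) = density lborel (normal_density 0 \<sigma>)"
      using sp by (simp add: distributed_def)
    then have nl: "normal_law v = distr ?M lborel (\<lambda>x. \<sigma> * x)"
      using False by (simp add: normal_law_def \<sigma>_def)
    have rd: "real_distribution (distr ?M lborel (\<lambda>x. \<sigma> * x))"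
      unfolding real_distribution_def real_distribution_axioms_def
      by (auto intro!: M.prob_space_distr)
    have "char (distr ?M lborel (\<lambda>x. \<sigma> * x)) u = char ?M (u * \<sigma>)"
      unfolding char_def by (subst integral_distr) (auto simp: mult.assoc)
    also have "\<dots> = complex_of_real (exp (- (v * u^2 / 2)))"
      using vp by (simp add: char_std_normal_distribution \<sigma>_def power_mult_distrib)
    finally show ?thesis using nl rd by simp
  qed
  then show "real_distribution (normal_law v)" and "char (normal_law v) u = complex_of_real (exp (- (v * u^2 / 2)))"
    by auto
qed

lemma erw_space_eq: "erw_space L p = stream_space (measure_pmf (Rp L p))"
  by (simp add: erw_space_def Rp_def)

lemma erw_X_eq: "erw_X jar0 x0 t \<omega> = snd (stt t (jar0, x0) \<omega>)"
  by (simp add: erw_X_def stt_def)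

lemma weak_part:
  assumes L: "L \<ge> 1" and p: "0 \<le> p" "p < 1" and v0: "valid L (jar0, x0)"
  shows "weak_conv_m
           (\<lambda>t. distr (erw_space L p) borel (\<lambda>\<omega>. real_of_int (erw_X jar0 x0 t \<omega>) / sqrt (real t)))
           (normal_law (p / (1 - p)))"
proof (rule levy_continuity)
  let ?S = "stream_space (measure_pmf (Rp L p))"
  interpret S: prob_space ?S by (rule prob_space.prob_space_stream_space) (rule prob_space_measure_pmf)
  have meas: "(\<lambda>\<omega>. real_of_int (erw_X jar0 x0 t \<omega>) / sqrt (real t)) \<in> borel_measurable ?S" for t
    unfolding erw_X_eq
    by (rule measurable_compose[OF stt_measurable, where g="\<lambda>v. real_of_int (snd v) / sqrt (real t)"]) simp
  have v: "p / (1 - p) \<ge> 0" using p by simp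
  fix t :: nat
  show "real_distribution (distr (erw_space L p) borel (\<lambda>\<omega>. real_of_int (erw_X jar0 x0 t \<omega>) / sqrt (real t)))"
    unfolding erw_space_eq real_distribution_def real_distribution_axioms_def
    using meas by (auto intro!: S.prob_space_distr)
next
  show "real_distribution (normal_law (p / (1 - p)))" using p by (intro normal_law_props) simp
next
  let ?S = "stream_space (measure_pmf (Rp L p))"
  have meas: "(\<lambda>\<omega>. real_of_int (erw_X jar0 x0 t \<omega>) / sqrt (real t)) \<in> borel_measurable ?S" for t
    unfolding erw_X_eq
    by (rule measurable_compose[OF stt_measurable, where g="\<lambda>v. real_of_int (snd v) / sqrt (real t)"]) simp
  fix u :: real
  have "char (distr (erw_space L p) borel (\<lambda>\<omega>. real_of_int (erw_X jar0 x0 t \<omega>) / sqrt (real t))) u =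
     (\<integral>v. iexp (u * (real_of_int (snd v) / sqrt (real t))) \<partial>measure_pmf (Kp L p t (jar0, x0)))" for t
  proof -
    have "(\<integral>x. iexp (u * x) \<partial>distr ?S borel (\<lambda>\<omega>. real_of_int (erw_X jar0 x0 t \<omega>) / sqrt (real t)))
       = (\<integral>\<omega>. iexp (u * (real_of_int (erw_X jar0 x0 t \<omega>) / sqrt (real t))) \<partial>?S)"
      by (rule integral_distr[OF meas]) simp
    also have "\<dots> = (\<integral>v. iexp (u * (real_of_int (snd v) / sqrt (real t))) \<partial>measure_pmf (Kp L p t (jar0, x0)))"
      unfolding erw_X_eq by (rule integral_stt)
    finally show ?thesis by (simp add: char_def erw_space_eq)
  qed
  then show "(\<lambda>t. char (distr (erw_space L p) borel (\<lambda>\<omega>. real_of_int (erw_X jar0 x0 t \<omega>) / sqrt (real t))) u)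
      \<longlonglongrightarrow> char (normal_law (p / (1 - p))) u"
    using clt_char[OF L p v0, of u] normal_law_props(2)[of "p/(1-p)" u] p by simp
qed

lemma ae_part:
  assumes L: "L \<ge> 1" and p: "0 \<le> p" "p < 1" and v0: "valid L (jar0, x0)"
  shows "AE \<omega> in erw_space L p. (\<lambda>t. real_of_int (erw_X jar0 x0 t \<omega>) / real t) \<longlonglongrightarrow> 0"
proof -
  let ?S = "stream_space (measure_pmf (Rp L p))"
  define s0 where "s0 = (jar0, x0)"
  interpret S: prob_space ?S by (rule prob_space.prob_space_stream_space) (rule prob_space_measure_pmf)
  define c where "c = (1 - 2*p) / (2*(1-p))"
  define q where "q = p/(1-p)"
  have q0: "q \<ge> 0" using p by (simp add: q_def)
  define m0 where "m0 = mm c s0"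
  define A where "A k t = {\<omega> \<in> space ?S. (1 / real (Suc k)) * t \<le> \<bar>mm c (stt t s0 \<omega>) - m0\<bar>}" for k t :: nat
  have Asets: "A k t \<in> sets ?S" for k t
  proof -
    have "A k t = stt t s0 -` {v. (1 / real (Suc k)) * t \<le> \<bar>mm c v - m0\<bar>} \<inter> space ?S"
      unfolding A_def by auto
    then show ?thesis by (simp add: measurable_sets[OF stt_measurable])
  qed
  have Ameas: "measure ?S (A k t) = measure_pmf.prob (Kp L p t s0) {v. (1 / real (Suc k)) * t \<le> \<bar>mm c v - mm c s0\<bar>}" for k t
  proof -
    have "A k t = stt t s0 -` {v. (1 / real (Suc k)) * t \<le> \<bar>mm c v - m0\<bar>} \<inter> space ?S"
      unfolding A_def by auto
    then have "measure ?S (A k t) = measure (distr ?S (count_space UNIV) (stt t s0)) {v. (1 / real (Suc k)) * t \<le> \<bar>mm c v - m0\<bar>}"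
      by (simp add: measure_distr[OF stt_measurable])
    then show ?thesis by (simp only: distr_stt m0_def)
  qed
  have AEk: "AE \<omega> in ?S. eventually (\<lambda>t. \<omega> \<in> space ?S - A k t) sequentially" for k
  proof (rule borel_cantelli_AE1[OF Asets])
    show "emeasure ?S (A k t) < \<infinity>" for t by (simp add: S.emeasure_eq_measure)
    define \<kappa> where "\<kappa> = (1 / real (Suc k))^2 / (4*(1+q)^2)"
    have kp: "\<kappa> > 0" unfolding \<kappa>_def using q0 by simp
    have sg: "summable (\<lambda>t. 2 * exp (- \<kappa>) ^ t)"
      by (intro summable_mult summable_geometric) (use kp in simp)
    show "summable (\<lambda>t. measure ?S (A k t))"
    proof (rule summable_comparison_test'[OF sg])
      fix t :: nat
      have "measure ?S (A k t) \<le> 2 * exp (- (t * \<kappa>))"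
        unfolding Ameas \<kappa>_def by (rule tail_bound[OF L p _ c_def q_def]) (use v0 s0_def in auto)
      also have "exp (- (t * \<kappa>)) = exp (- \<kappa>) ^ t" by (simp flip: exp_of_nat_mult)
      finally show "norm (measure ?S (A k t)) \<le> 2 * exp (- \<kappa>) ^ t" by simp
    qed
  qed
  then have AE1: "AE \<omega> in ?S. \<forall>k. eventually (\<lambda>t. \<omega> \<in> space ?S - A k t) sequentially"
    by (simp add: AE_all_countable)
  have AE2: "AE \<omega> in ?S. \<forall>t. valid L (stt t s0 \<omega>)"
  proof (subst AE_all_countable, intro allI)
    fix t
    have "AE v in distr ?S (count_space UNIV) (stt t s0). valid L v"
      unfolding distr_stt AE_measure_pmf_iff using valid_Kp[OF L] v0 s0_def by blast
    then show "AE \<omega> in ?S. valid L (stt t s0 \<omega>)"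
      by (subst (asm) AE_distr_iff[OF stt_measurable]) auto
  qed
  have "AE \<omega> in ?S. (\<lambda>t. real_of_int (erw_X jar0 x0 t \<omega>) / real t) \<longlonglongrightarrow> 0"
    using AE1 AE2
  proof eventually_elim
    case (elim \<omega>)
    define C where "C = \<bar>m0\<bar> + \<bar>c\<bar> * L"
    have C0: "C \<ge> 0" unfolding C_def by simp
    have Xb: "\<bar>real_of_int (erw_X jar0 x0 t \<omega>)\<bar> \<le> C + \<bar>mm c (stt t s0 \<omega>) - m0\<bar>" for t
    proof -
      define v where "v = stt t s0 \<omega>"
      have "\<bar>sum_list (fst v)\<bar> \<le> int L" using valid_J[of L v] elim(2) unfolding v_def by blast
      then have "real_of_int \<bar>sum_list (fst v)\<bar> \<le> real_of_int (int L)" by (simp only: of_int_le_iff)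
      then have J: "\<bar>real_of_int (sum_list (fst v))\<bar> \<le> L" by simp
      have "real_of_int (erw_X jar0 x0 t \<omega>) = m0 + (mm c v - m0) + c * real_of_int (sum_list (fst v))"
        unfolding erw_X_eq v_def s0_def mm_def by simp
      moreover have "\<bar>c * real_of_int (sum_list (fst v))\<bar> \<le> \<bar>c\<bar> * L"
        using J by (simp add: abs_mult mult_left_mono)
      ultimately show ?thesis unfolding C_def v_def by linarith
    qed
    show ?case
    proof (rule LIMSEQ_I)
      fix r :: real assume r: "r > 0"
      obtain k :: nat where k: "2 / r < k" using reals_Archimedean2 by blast
      have k1: "1 / real (Suc k) < r / 2"
      proof -
        have "2 / r < real (Suc k)" using k by simp
        then have "2 < r * real (Suc k)" using r by (simp add: field_simps)
        then show ?thesis using r by (simp add: field_simps)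
      qed
      obtain N1 where N1: "\<And>t. t \<ge> N1 \<Longrightarrow> \<omega> \<in> space ?S - A k t"
        using elim(1) unfolding eventually_sequentially by blast
      obtain N2 :: nat where N2: "2 * C / r < N2" using reals_Archimedean2 by blast
      show "\<exists>no. \<forall>t\<ge>no. norm (real_of_int (erw_X jar0 x0 t \<omega>) / real t - 0) < r"
      proof (intro exI allI impI)
        fix t assume t: "t \<ge> max N1 (Suc N2)"
        then have tp: "real t > 0" by simp
        have "\<omega> \<notin> A k t" using N1[of t] t by auto
        then have m: "\<bar>mm c (stt t s0 \<omega>) - m0\<bar> < (1 / real (Suc k)) * t" unfolding A_def by (auto simp: space_stream_space)
        have Ct: "C < r / 2 * t"
        proof -
          have "2 * C / r < t" using N2 t by linarith
          then show ?thesis using r by (simp add: field_simps)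
        qed
        have "\<bar>real_of_int (erw_X jar0 x0 t \<omega>)\<bar> < r / 2 * t + r / 2 * t"
        proof -
          have "(1 / real (Suc k)) * t \<le> r / 2 * t" using k1 tp by (intro mult_right_mono) auto
          then show ?thesis using Xb[of t] m Ct by linarith
        qed
        then have "\<bar>real_of_int (erw_X jar0 x0 t \<omega>)\<bar> < r * t" by simp
        then show "norm (real_of_int (erw_X jar0 x0 t \<omega>) / real t - 0) < r"
          using tp by (simp add: abs_div field_simps)
      qed
    qed
  qed
  then show ?thesis unfolding erw_space_eq .
qed


theorem mainTheorem13:
  fixes L :: nat and p :: real and jar0 :: "int list" and x0 :: int
  assumes "L \<ge> 1" and "0 \<le> p" and "p < 1"
    and "length jar0 = L" and "set jar0 \<subseteq> {1, -1}"
  shows "(AE \<omega> in erw_space L p.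
           (\<lambda>t. real_of_int (erw_X jar0 x0 t \<omega>) / real t) \<longlonglongrightarrow> 0) \<and>
         weak_conv_m
           (\<lambda>t. distr (erw_space L p) borel (\<lambda>\<omega>. real_of_int (erw_X jar0 x0 t \<omega>) / sqrt (real t)))
           (normal_law (p / (1 - p)))"
proof -
  have v0: "valid L (jar0, x0)" using assms by (simp add: valid_def)
  show ?thesis using ae_part[OF assms(1,2,3) v0] weak_part[OF assms(1,2,3) v0] by blast
qed

end
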